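(* For all integers $r\ge 3$ and $n\ge 2r$, \[ \log m(n,r)\le \frac{1}{n-r+1}\binom{n}{r}\log\frac{\mathrm{e}\,2^n(r+1)(n-r+1)}{\binom{n}{r}}. \]
   Context: $m(n,r)$ denotes the number of matroids of rank $r$ on the ground set $[n]=\{1,\dots,n\}$. $\log$ is the logarithm to base $2$ and $\mathrm{e}$ is Euler's number. *)

theory Defs
  imports "HOL-Analysis.Analysis"
begin

definition matroid_bases :: "'a set \<Rightarrow> 'a set set \<Rightarrow> bool" where
  "matroid_bases E B \<longleftrightarrow>
     B \<subseteq> Pow E \<and> B \<noteq> {} \<and>
     (\<forall>B1\<in>B. \<forall>B2\<in>B. \<forall>x\<in>B1 - B2. \<exists>y\<in>B2 - B1. insert y (B1 - {x}) \<in> B)"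

definition matroid_rank_bases :: "'a set set \<Rightarrow> nat \<Rightarrow> bool" where
  "matroid_rank_bases B r \<longleftrightarrow> (\<forall>X\<in>B. card X = r)"

definition num_matroids :: "nat \<Rightarrow> nat \<Rightarrow> nat" where
  "num_matroids n r = card {B. matroid_bases {1..n} B \<and> matroid_rank_bases B r}"

end

theory Submission
  imports Defs
begin


locale bm =
  fixes E :: "nat set" and BB :: "nat set set" and r :: nat
  assumes finE: "finite E" and mb: "matroid_bases E BB" and rkB: "matroid_rank_bases BB r"
begin

definition indep :: "nat set \<Rightarrow> bool" where "indep I \<longleftrightarrow> (\<exists>B\<in>BB. I \<subseteq> B)"
definition rk :: "nat set \<Rightarrow> nat" where "rk A = Max (card ` {I. I \<subseteq> A \<and> indep I})"

lemma B_sub: "B \<in> BB \<Longrightarrow> B \<subseteq> E" using mb unfolding matroid_bases_def by auto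
lemma B_card: "B \<in> BB \<Longrightarrow> card B = r" using rkB unfolding matroid_rank_bases_def by auto
lemma B_ne: "BB \<noteq> {}" using mb unfolding matroid_bases_def by auto
lemma exch: "B1 \<in> BB \<Longrightarrow> B2 \<in> BB \<Longrightarrow> x \<in> B1 - B2 \<Longrightarrow> \<exists>y\<in>B2 - B1. insert y (B1 - {x}) \<in> BB"
  using mb unfolding matroid_bases_def by blast
lemma B_fin: "B \<in> BB \<Longrightarrow> finite B" using B_sub finE finite_subset by blast

lemma indep_E: "indep I \<Longrightarrow> I \<subseteq> E" unfolding indep_def using B_sub by blast
lemma indep_fin: "indep I \<Longrightarrow> finite I" using indep_E finE finite_subset by blast
lemma indep_card: "indep I \<Longrightarrow> card I \<le> r" unfolding indep_def using B_card B_fin card_mono by metis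
lemma indep_sub: "indep J \<Longrightarrow> I \<subseteq> J \<Longrightarrow> indep I" unfolding indep_def by blast
lemma indep_empty: "indep {}" unfolding indep_def using B_ne by blast
lemma B_indep: "B \<in> BB \<Longrightarrow> indep B" unfolding indep_def by blast

lemma augment:
  assumes I: "indep I" and J: "indep J" and lt: "card I < card J"
  shows "\<exists>e\<in>J - I. indep (insert e I)"
proof (rule ccontr)
  assume neg: "\<not> ?thesis"
  obtain B2 where B2: "B2 \<in> BB" "J \<subseteq> B2" using J indep_def by blast
  obtain B0 where B0: "B0 \<in> BB" "I \<subseteq> B0" using I indep_def by blast
  obtain B1 where B1: "B1 \<in> BB \<and> I \<subseteq> B1"
    and min: "\<forall>B. B \<in> BB \<and> I \<subseteq> B \<longrightarrow> card (B1 - B2) \<le> card (B - B2)"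
    using ex_has_least_nat[where P="\<lambda>B. B \<in> BB \<and> I \<subseteq> B" and k=B0 and m="\<lambda>B. card (B - B2)"] B0
    by blast
  have sub: "B1 - I \<subseteq> B2 - J"
  proof
    fix x assume x: "x \<in> B1 - I"
    show "x \<in> B2 - J"
    proof (rule ccontr)
      assume nx: "x \<notin> B2 - J"
      show False
      proof (cases "x \<in> J")
        case True
        then have "indep (insert x I)" using x B1 unfolding indep_def by blast
        then show False using neg x True by blast
      next
        case False
        then have "x \<in> B1 - B2" using nx x by blast
        then obtain y where y: "y \<in> B2 - B1" "insert y (B1 - {x}) \<in> BB" using exch B1 B2 by blast
        have "I \<subseteq> insert y (B1 - {x})" using x B1 by blast
        then have "card (B1 - B2) \<le> card (insert y (B1 - {x}) - B2)" using min y by blast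
        also have "insert y (B1 - {x}) - B2 = (B1 - B2) - {x}" using y by blast
        also have "card \<dots> < card (B1 - B2)"
          using \<open>x \<in> B1 - B2\<close> B_fin B1 by (meson card_Diff1_less finite_Diff)
        finally show False by simp
      qed
    qed
  qed
  have fB1: "finite B1" using B1 B_fin by blast
  have IB1: "I \<subseteq> B1" using B1 by blast
  have "card (B1 - I) = card B1 - card I" using card_Diff_subset[OF finite_subset[OF IB1 fB1] IB1] .
  moreover have "card I \<le> card B1" using B1 fB1 card_mono by blast
  ultimately have c1: "card B1 \<le> card I + card (B1 - I)" by linarith
  have c2: "card (B1 - I) \<le> card (B2 - J)" using sub B2 B_fin card_mono by (meson finite_Diff)
  have c3: "card (B2 - J) = r - card J" using B2 B_card B_fin by (metis card_Diff_subset finite_subset)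
  have "card J \<le> r" using J indep_card by blast
  then have "card B1 < r" using lt c1 c2 c3 by linarith
  then show False using B1 B_card by simp
qed

lemma indsets_fin: "finite {I. I \<subseteq> A \<and> indep I}"
  by (rule finite_subset[of _ "Pow E"]) (auto simp: finE dest: indep_E)

lemma rk_ge: "indep I \<Longrightarrow> I \<subseteq> A \<Longrightarrow> card I \<le> rk A"
  unfolding rk_def using indsets_fin by (intro Max_ge) auto

lemma rk_ex: "\<exists>I. I \<subseteq> A \<and> indep I \<and> card I = rk A"
proof -
  have "rk A \<in> card ` {I. I \<subseteq> A \<and> indep I}" unfolding rk_def
    using indsets_fin indep_empty by (intro Max_in) auto
  then show ?thesis by auto
qed

lemma rk_le_card: "finite A \<Longrightarrow> rk A \<le> card A"
  using rk_ex[of A] card_mono by metis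

lemma rk_le_r: "rk A \<le> r" using rk_ex[of A] indep_card by metis

lemma rk_mono: "A \<subseteq> B \<Longrightarrow> rk A \<le> rk B"
  using rk_ex[of A] rk_ge[of _ B] by fastforce

lemma rk_indep: "indep I \<Longrightarrow> rk I = card I"
  using rk_ge[of I I] rk_le_card[of I] indep_fin by fastforce

lemma rk_insert: "rk (insert e A) \<le> Suc (rk A)"
proof -
  obtain J where J: "J \<subseteq> insert e A" "indep J" "card J = rk (insert e A)" using rk_ex by blast
  have "indep (J - {e})" using J indep_sub by blast
  moreover have "J - {e} \<subseteq> A" using J by blast
  ultimately have "card (J - {e}) \<le> rk A" using rk_ge by blast
  moreover have "card J \<le> Suc (card (J - {e}))"
  proof (cases "e \<in> J")
    case True
    then have "card (J - {e}) = card J - 1" using J(2) indep_fin by simp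
    moreover have "card J > 0" using True J(2) indep_fin card_gt_0_iff by blast
    ultimately show ?thesis by linarith
  qed simp
  ultimately show ?thesis using J by linarith
qed

lemma extend:
  assumes "indep I" "I \<subseteq> S"
  shows "\<exists>J. I \<subseteq> J \<and> J \<subseteq> S \<and> indep J \<and> card J = rk S"
  using assms
proof (induction "rk S - card I" arbitrary: I)
  case 0
  then have "card I \<le> rk S" using rk_ge by blast
  then show ?case using 0 rk_ge[of I S] by (intro exI[of _ I]) auto
next
  case (Suc k)
  obtain J0 where J0: "J0 \<subseteq> S" "indep J0" "card J0 = rk S" using rk_ex by blast
  have "card I < card J0" using Suc J0 by linarith
  then obtain e where e: "e \<in> J0 - I" "indep (insert e I)" using augment Suc J0 by blast
  have ci: "card (insert e I) = Suc (card I)" using e indep_fin Suc.prems by simp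
  have "k = rk S - card (insert e I)" using Suc.hyps ci by simp
  then obtain J where "insert e I \<subseteq> J" "J \<subseteq> S" "indep J" "card J = rk S"
    using Suc.hyps(1)[of "insert e I"] e J0 Suc.prems by blast
  then show ?case by blast
qed

lemma submod: "rk (A \<union> B) + rk (A \<inter> B) \<le> rk A + rk B"
proof -
  obtain I where I: "I \<subseteq> A \<inter> B" "indep I" "card I = rk (A \<inter> B)" using rk_ex by blast
  obtain J where J: "I \<subseteq> J" "J \<subseteq> A \<union> B" "indep J" "card J = rk (A \<union> B)"
    using extend[of I "A \<union> B"] I by blast
  have fJ: "finite J" using J indep_fin by blast
  have a: "card (J \<inter> A) \<le> rk A" using J indep_sub rk_ge by (meson inf_le1 inf_le2)
  have b: "card (J \<inter> B) \<le> rk B" using J indep_sub rk_ge by (meson inf_le1 inf_le2)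
  have c: "card (J \<inter> A \<inter> B) \<le> card I"
    using J I indep_sub rk_ge[of "J \<inter> A \<inter> B" "A \<inter> B"] by (metis inf_le1 inf_assoc inf_le2)
  have "J = (J \<inter> A) \<union> (J \<inter> B)" using J by blast
  then have eq: "card J + card (J \<inter> A \<inter> B) = card (J \<inter> A) + card (J \<inter> B)"
    using card_Un_Int[of "J \<inter> A" "J \<inter> B"] fJ by (metis finite_Int inf_assoc inf_left_idem inf_commute)
  have "card I \<le> card (J \<inter> A \<inter> B)" using I J fJ by (intro card_mono) auto
  then show ?thesis using a b c I J eq by linarith
qed

end


context bm begin

definition cl :: "nat set \<Rightarrow> nat set" where "cl A = {e\<in>E. rk (insert e A) = rk A}"
definition cyc :: "nat set \<Rightarrow> nat set" where "cyc F = {e\<in>F. rk (F - {e}) = rk F}"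

lemma rk_insert_ge: "rk A \<le> rk (insert e A)" by (rule rk_mono) blast

lemma closure_rk:
  assumes "finite B" "\<forall>f\<in>B. rk (insert f A) = rk A"
  shows "rk (A \<union> B) = rk A"
  using assms
proof (induction B rule: finite_induct)
  case empty then show ?case by simp
next
  case (insert f B)
  have IH: "rk (A \<union> B) = rk A" using insert by blast
  have f: "rk (insert f A) = rk A" using insert by blast
  have s: "rk (insert f A \<union> (A \<union> B)) + rk (insert f A \<inter> (A \<union> B)) \<le> rk (insert f A) + rk (A \<union> B)"
    by (rule submod)
  have "rk A \<le> rk (insert f A \<inter> (A \<union> B))" by (rule rk_mono) blast
  moreover have U: "insert f A \<union> (A \<union> B) = A \<union> insert f B" by blast
  moreover have "rk A \<le> rk (A \<union> insert f B)" by (rule rk_mono) blast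
  ultimately show ?case using s[unfolded U] IH f by linarith
qed

lemma cl_sup: "A \<subseteq> E \<Longrightarrow> A \<subseteq> cl A" unfolding cl_def by (auto simp: insert_absorb)

lemma cl_E: "cl A \<subseteq> E" unfolding cl_def by blast

lemma rk_cl: assumes "A \<subseteq> E" shows "rk (cl A) = rk A"
proof -
  have "finite (cl A)" using cl_E finE finite_subset by blast
  then have "rk (A \<union> cl A) = rk A" by (rule closure_rk) (auto simp: cl_def)
  moreover have "A \<union> cl A = cl A" using cl_sup[OF assms] by blast
  ultimately show ?thesis by simp
qed

lemma cl_mono_el: assumes "A \<subseteq> F" "e \<in> cl A" shows "rk (insert e F) = rk F"
proof -
  have s: "rk (insert e A \<union> F) + rk (insert e A \<inter> F) \<le> rk (insert e A) + rk F" by (rule submod)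
  have "rk A \<le> rk (insert e A \<inter> F)" using assms by (intro rk_mono) blast
  moreover have U: "insert e A \<union> F = insert e F" using assms by blast
  moreover have "rk (insert e A) = rk A" using assms unfolding cl_def by blast
  ultimately have "rk (insert e F) \<le> rk F" using s[unfolded U] by linarith
  then show ?thesis using rk_insert_ge[of F e] by linarith
qed

lemma cl_mono: "A \<subseteq> F \<Longrightarrow> cl A \<subseteq> cl F"
  using cl_mono_el unfolding cl_def by blast

lemma cl_cl: assumes "A \<subseteq> E" shows "cl (cl A) = cl A"
proof
  show "cl A \<subseteq> cl (cl A)" using cl_sup cl_E by blast
  show "cl (cl A) \<subseteq> cl A"
  proof
    fix e assume e: "e \<in> cl (cl A)"
    then have "rk (insert e (cl A)) = rk A" using rk_cl[OF assms] unfolding cl_def by simp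
    moreover have "rk (insert e A) \<le> rk (insert e (cl A))" using cl_sup[OF assms] by (intro rk_mono) blast
    ultimately have "rk (insert e A) = rk A" using rk_insert_ge[of A e] by linarith
    then show "e \<in> cl A" using e cl_E unfolding cl_def by blast
  qed
qed

lemma closed_char:
  assumes F: "cl F = F" and AF: "A \<subseteq> F" and rkA: "rk A = rk F"
  shows "cl A = F"
proof
  show "cl A \<subseteq> F" using cl_mono[OF AF] F by simp
  show "F \<subseteq> cl A"
  proof
    fix e assume e: "e \<in> F"
    have "rk (insert e A) \<le> rk F" using e AF by (intro rk_mono) blast
    then have "rk (insert e A) = rk A" using rkA rk_insert_ge[of A e] by linarith
    moreover have "e \<in> E" using e F cl_E by blast
    ultimately show "e \<in> cl A" unfolding cl_def by blast
  qed
qed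

lemma coloop1:
  assumes d: "d \<in> F" "rk (F - {d}) \<noteq> rk F" and A: "A \<subseteq> F" "d \<in> A"
  shows "rk (A - {d}) + 1 = rk A"
proof -
  have "rk F \<le> Suc (rk (F - {d}))" using rk_insert[of d "F - {d}"] d by (simp add: insert_absorb)
  moreover have "rk (F - {d}) \<le> rk F" by (rule rk_mono) blast
  ultimately have Fd: "rk (F - {d}) + 1 = rk F" using d by linarith
  have s: "rk (A \<union> (F - {d})) + rk (A \<inter> (F - {d})) \<le> rk A + rk (F - {d})" by (rule submod)
  have "A \<union> (F - {d}) = F" using A by blast
  moreover have "A \<inter> (F - {d}) = A - {d}" using A by blast
  ultimately have "rk (A - {d}) + 1 \<le> rk A" using s Fd by simp
  moreover have "rk A \<le> Suc (rk (A - {d}))" using rk_insert[of d "A - {d}"] A by (simp add: insert_absorb)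
  ultimately show ?thesis by linarith
qed

lemma coloops:
  assumes "finite D'" "D' \<subseteq> F - cyc F" "A \<subseteq> F" "D' \<subseteq> A"
  shows "rk (A - D') + card D' = rk A"
  using assms
proof (induction D' rule: finite_induct)
  case empty then show ?case by simp
next
  case (insert d D')
  have IH: "rk (A - D') + card D' = rk A" using insert by blast
  have d: "d \<in> F" "rk (F - {d}) \<noteq> rk F" using insert.prems unfolding cyc_def by auto
  have "rk ((A - D') - {d}) + 1 = rk (A - D')"
    by (rule coloop1[OF d]) (use insert in auto)
  moreover have "A - insert d D' = (A - D') - {d}" by blast
  ultimately show ?case using IH insert by simp
qed

end


context bm begin

lemma span_count:
  assumes fZ: "finite Z" and cycZ: "\<forall>e\<in>Z. rk (Z - {e}) = rk Z" and s1: "rk Z \<le> s" and s2: "s < card Z"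
  shows "s + 1 \<le> card {S. S \<subseteq> Z \<and> card S = s \<and> rk S = rk Z}"
proof -
  obtain I where I: "I \<subseteq> Z" "indep I" "card I = rk Z" using rk_ex by blast
  have fI: "finite I" using I indep_fin by blast
  have "card (Z - I) = card Z - card I" using I fI by (simp add: card_Diff_subset)
  then have "s - card I \<le> card (Z - I)" using s2 by linarith
  then obtain T where T: "T \<subseteq> Z - I" "card T = s - card I" using obtain_subset_with_card_n by metis
  define S0 where "S0 = I \<union> T"
  have S0Z: "S0 \<subseteq> Z" using I T unfolding S0_def by blast
  have fS0: "finite S0" using S0Z fZ finite_subset by blast
  have cS0: "card S0 = s"
  proof -
    have "card S0 = card I + card T" unfolding S0_def
      using T fS0 S0_def by (intro card_Un_disjoint) auto
    then show ?thesis using T I s1 by linarith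
  qed
  have rS0: "rk S0 = rk Z"
    using rk_ge[of I S0] rk_mono[OF S0Z] I unfolding S0_def by fastforce
  have key: "\<forall>e\<in>S0. \<exists>f. f \<in> Z - S0 \<and> rk (insert f (S0 - {e})) = rk Z"
  proof
    fix e assume e: "e \<in> S0"
    show "\<exists>f. f \<in> Z - S0 \<and> rk (insert f (S0 - {e})) = rk Z"
    proof (cases "rk (S0 - {e}) = rk Z")
      case True
      have "card S0 < card Z" using cS0 s2 by simp
      moreover have "Z - S0 = {} \<Longrightarrow> card Z \<le> card S0" using fS0 card_mono by (metis Diff_eq_empty_iff)
      ultimately have "Z - S0 \<noteq> {}" by linarith
      then obtain f where f: "f \<in> Z - S0" by blast
      have "rk (S0 - {e}) \<le> rk (insert f (S0 - {e}))" by (rule rk_insert_ge)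
      moreover have "rk (insert f (S0 - {e})) \<le> rk Z" using f S0Z by (intro rk_mono) blast
      ultimately show ?thesis using True f by (intro exI[of _ f]) auto
    next
      case False
      have "\<exists>f\<in>Z - {e}. rk (insert f (S0 - {e})) \<noteq> rk (S0 - {e})"
      proof (rule ccontr)
        assume "\<not> (\<exists>f\<in>Z - {e}. rk (insert f (S0 - {e})) \<noteq> rk (S0 - {e}))"
        then have "rk ((S0 - {e}) \<union> (Z - {e})) = rk (S0 - {e})"
          by (intro closure_rk) (use fZ in auto)
        moreover have "(S0 - {e}) \<union> (Z - {e}) = Z - {e}" using S0Z by blast
        ultimately show False using False cycZ e S0Z by auto
      qed
      then obtain f where f: "f \<in> Z - {e}" "rk (insert f (S0 - {e})) \<noteq> rk (S0 - {e})" by blast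
      have fn: "f \<notin> S0"
      proof
        assume "f \<in> S0"
        then have "insert f (S0 - {e}) = S0 - {e}" using f by blast
        then show False using f by simp
      qed
      have "rk S0 \<le> Suc (rk (S0 - {e}))" using rk_insert[of e "S0 - {e}"] e by (simp add: insert_absorb)
      moreover have "rk (S0 - {e}) \<le> rk (insert f (S0 - {e}))" by (rule rk_insert_ge)
      moreover have "rk (insert f (S0 - {e})) \<le> rk Z" using f S0Z by (intro rk_mono) blast
      ultimately have "rk (insert f (S0 - {e})) = rk Z" using f rS0 by linarith
      then show ?thesis using fn f by (intro exI[of _ f]) auto
    qed
  qed
  from bchoice[OF key] obtain g where g: "\<forall>e\<in>S0. g e \<in> Z - S0 \<and> rk (insert (g e) (S0 - {e})) = rk Z" by blast
  define h where "h e = insert (g e) (S0 - {e})" for e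
  have sub: "insert S0 (h ` S0) \<subseteq> {S. S \<subseteq> Z \<and> card S = s \<and> rk S = rk Z}"
  proof
    fix S assume "S \<in> insert S0 (h ` S0)"
    then show "S \<in> {S. S \<subseteq> Z \<and> card S = s \<and> rk S = rk Z}"
    proof
      assume "S = S0" then show ?thesis using S0Z cS0 rS0 by blast
    next
      assume "S \<in> h ` S0"
      then obtain e where e: "e \<in> S0" "S = h e" by blast
      have "card S = Suc (card (S0 - {e}))" using e g fS0 unfolding h_def by auto
      also have "card (S0 - {e}) = s - 1" using e fS0 cS0 by simp
      finally have cc: "card S = Suc (s - 1)" .
      have "s > 0" using e fS0 cS0 card_gt_0_iff by blast
      then have "card S = s" using cc by simp
      then show ?thesis using e g S0Z unfolding h_def by auto
    qed
  qed
  have inj: "inj_on h S0"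
  proof
    fix e1 e2 assume e: "e1 \<in> S0" "e2 \<in> S0" "h e1 = h e2"
    have "h e1 \<inter> S0 = S0 - {e1}" using g e(1) unfolding h_def by auto
    moreover have "h e2 \<inter> S0 = S0 - {e2}" using g e(2) unfolding h_def by auto
    ultimately have "S0 - {e1} = S0 - {e2}" using e by simp
    then show "e1 = e2" using e by blast
  qed
  have notin: "S0 \<notin> h ` S0"
  proof
    assume "S0 \<in> h ` S0"
    then obtain e where e: "e \<in> S0" "S0 = h e" by blast
    then have "e \<in> h e" by simp
    then show False using g e unfolding h_def by auto
  qed
  have "card (insert S0 (h ` S0)) = s + 1"
    using notin inj fS0 cS0 by (simp add: card_image)
  moreover have "finite {S. S \<subseteq> Z \<and> card S = s \<and> rk S = rk Z}"
    by (rule finite_subset[of _ "Pow Z"]) (use fZ in auto)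
  ultimately show ?thesis using sub card_mono by metis
qed

end


context bm begin

lemma nonbasis_main:
  assumes r1: "1 \<le> r" and XE: "X \<subseteq> E" and cX: "card X = r" and XB: "X \<notin> BB"
  shows "rk (cyc (cl X)) < card (X \<inter> cyc (cl X)) \<and>
         r \<le> card {Y. Y \<subseteq> E \<and> card Y = r - 1 \<and> cyc (cl Y) = cyc (cl X)}"
proof -
  have fX: "finite X" using XE finE finite_subset by blast
  have nind: "\<not> indep X"
  proof
    assume "indep X"
    then obtain B where B: "B \<in> BB" "X \<subseteq> B" unfolding indep_def by blast
    then have "X = B" using card_subset_eq[OF B_fin[OF B(1)] B(2)] cX B_card by simp
    then show False using XB B by simp
  qed
  have rkX: "rk X < r"
  proof -
    have "rk X \<le> r" using rk_le_card[OF fX] cX by simp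
    moreover have "rk X \<noteq> r"
    proof
      assume "rk X = r"
      then obtain I where I: "I \<subseteq> X" "indep I" "card I = card X" using rk_ex cX by metis
      then have "I = X" using card_subset_eq[OF fX] by blast
      then show False using I nind by simp
    qed
    ultimately show ?thesis by simp
  qed
  define F where "F = cl X"
  define Z where "Z = cyc F"
  define D where "D = F - Z"
  have XF: "X \<subseteq> F" unfolding F_def using cl_sup[OF XE] .
  have FE: "F \<subseteq> E" unfolding F_def using cl_E .
  have fF: "finite F" using FE finE finite_subset by blast
  have rkF: "rk F = rk X" unfolding F_def using rk_cl[OF XE] .
  have clF: "cl F = F" unfolding F_def using cl_cl[OF XE] .
  have ZF: "Z \<subseteq> F" unfolding Z_def cyc_def by blast
  have fZ: "finite Z" using ZF fF finite_subset by blast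
  have fD: "finite D" using fF unfolding D_def by simp
  have Dco: "D \<subseteq> F - cyc F" unfolding D_def Z_def by blast
  have Dco1: "\<And>d. d \<in> D \<Longrightarrow> d \<in> F \<and> rk (F - {d}) \<noteq> rk F" unfolding D_def Z_def cyc_def by blast
  have DX: "D \<subseteq> X"
  proof
    fix d assume d: "d \<in> D"
    show "d \<in> X"
    proof (rule ccontr)
      assume "d \<notin> X"
      then have "X \<subseteq> F - {d}" using XF by blast
      then have "rk X \<le> rk (F - {d})" by (rule rk_mono)
      moreover have "rk (F - {d}) + 1 = rk F" using coloop1[of d F F] Dco1[OF d] by blast
      ultimately show False using rkF by linarith
    qed
  qed
  have rkZ: "rk Z + card D = rk F"
    using coloops[OF fD Dco, of F] ZF unfolding D_def by (simp add: Diff_Diff_Int Int_absorb1 inf.absorb2)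
  have XZ: "X \<inter> Z = X - D" using XF unfolding D_def by blast
  have cXZ: "card (X \<inter> Z) = r - card D" using XZ card_Diff_subset[OF finite_subset[OF DX fX] DX] cX by simp
  have rkXZ: "rk (X \<inter> Z) = rk Z" using coloops[OF fD Dco XF DX] XZ rkZ rkF by simp
  have cD: "card D \<le> r - 1" using rkZ rkF rkX by linarith
  have partA: "rk Z < card (X \<inter> Z)" using rkZ rkF rkX cXZ cD by linarith
  have Zcyc: "\<forall>e\<in>Z. rk (Z - {e}) = rk Z"
  proof
    fix e assume e: "e \<in> Z"
    then have e2: "rk (F - {e}) = rk F" "e \<in> F" unfolding Z_def cyc_def by auto
    have "D \<subseteq> F - {e}" using e unfolding D_def by blast
    then have "rk (F - {e} - D) + card D = rk (F - {e})" using coloops[OF fD Dco, of "F - {e}"] by blast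
    moreover have "F - {e} - D = Z - {e}" using ZF unfolding D_def by blast
    ultimately show "rk (Z - {e}) = rk Z" using e2 rkZ by simp
  qed
  define s where "s = r - 1 - card D"
  have s1: "rk Z \<le> s" unfolding s_def using rkZ rkF rkX by linarith
  have s2: "s < card Z"
  proof -
    have "card (X \<inter> Z) \<le> card Z" using fZ by (intro card_mono) auto
    then show ?thesis unfolding s_def using cXZ cD r1 by linarith
  qed
  define SP where "SP = {S. S \<subseteq> Z \<and> card S = s \<and> rk S = rk Z}"
  have cSP: "s + 1 \<le> card SP" unfolding SP_def by (rule span_count[OF fZ Zcyc s1 s2])
  define T where "T = {Y. Y \<subseteq> E \<and> card Y = r - 1 \<and> cyc (cl Y) = Z}"
  have fT: "finite T" unfolding T_def by (rule finite_subset[of _ "Pow E"]) (use finE in auto)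
  have DZ: "D \<inter> Z = {}" unfolding D_def by blast
  have fam1: "(\<lambda>S. D \<union> S) ` SP \<subseteq> T"
  proof
    fix Y assume "Y \<in> (\<lambda>S. D \<union> S) ` SP"
    then obtain S where S: "S \<subseteq> Z" "card S = s" "rk S = rk Z" "Y = D \<union> S" unfolding SP_def by blast
    have fS: "finite S" using S fZ finite_subset by blast
    have YF: "Y \<subseteq> F" using S ZF unfolding D_def by blast
    have "D \<inter> S = {}" using S DZ by blast
    then have "card Y = card D + card S" using S fS fD card_Un_disjoint by metis
    then have cY: "card Y = r - 1" using S cD unfolding s_def by simp
    have "rk (Y - D) + card D = rk Y" using coloops[OF fD Dco YF] S by blast
    moreover have "Y - D = S" using S DZ by blast
    ultimately have "rk Y = rk F" using S rkZ by simp
    then have "cl Y = F" using closed_char[OF clF YF] by simp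
    then show "Y \<in> T" unfolding T_def Z_def using YF FE cY by blast
  qed
  have inj1: "inj_on (\<lambda>S. D \<union> S) SP"
  proof
    fix S1 S2 assume "S1 \<in> SP" "S2 \<in> SP" "D \<union> S1 = D \<union> S2"
    moreover have "S1 = (D \<union> S1) \<inter> Z" "S2 = (D \<union> S2) \<inter> Z" using \<open>S1 \<in> SP\<close> \<open>S2 \<in> SP\<close> DZ unfolding SP_def by blast+
    ultimately show "S1 = S2" by simp
  qed
  have fam2: "(\<lambda>d. X - {d}) ` D \<subseteq> T"
  proof
    fix Y assume "Y \<in> (\<lambda>d. X - {d}) ` D"
    then obtain d where d: "d \<in> D" "Y = X - {d}" by blast
    have dX: "d \<in> X" using d DX by blast
    have dF: "d \<in> F" "rk (F - {d}) \<noteq> rk F" using Dco1[OF d(1)] by auto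
    have cY: "card Y = r - 1" using d dX fX cX by simp
    have r1': "rk (F - {d}) + 1 = rk F" using coloop1[of d F F] dF by blast
    have r2': "rk (X - {d}) + 1 = rk X" using coloop1[of d F X] dF XF dX by blast
    have clFd: "cl (F - {d}) = F - {d}"
    proof
      show "F - {d} \<subseteq> cl (F - {d})" using cl_sup FE by blast
      show "cl (F - {d}) \<subseteq> F - {d}"
      proof
        fix e assume e: "e \<in> cl (F - {d})"
        then have "e \<in> F" using cl_mono[of "F - {d}" F] clF by blast
        moreover have "e \<noteq> d"
        proof
          assume "e = d"
          then have "rk (insert d (F - {d})) = rk (F - {d})" using e unfolding cl_def by blast
          moreover have "insert d (F - {d}) = F" using dF by blast
          ultimately show False using dF by simp
        qed
        ultimately show "e \<in> F - {d}" by blast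
      qed
    qed
    have YFd: "Y \<subseteq> F - {d}" using d XF by blast
    have "rk Y = rk (F - {d})" using d r1' r2' rkF by simp
    then have "cl Y = F - {d}" using closed_char[OF clFd YFd] by simp
    moreover have "cyc (F - {d}) = Z"
    proof (rule set_eqI)
      fix e
      show "e \<in> cyc (F - {d}) \<longleftrightarrow> e \<in> Z"
      proof (cases "e \<in> F - {d}")
        case True
        have "rk (F - {e} - {d}) + 1 = rk (F - {e})" using coloop1[of d F "F - {e}"] dF True by blast
        moreover have EQ: "F - {d} - {e} = F - {e} - {d}" by blast
        ultimately have "rk (F - {d} - {e}) = rk (F - {d}) \<longleftrightarrow> rk (F - {e}) = rk F" using r1' unfolding EQ by linarith
        then show ?thesis using True unfolding cyc_def Z_def by auto
      next
        case False
        then show ?thesis using d ZF unfolding cyc_def Z_def D_def by auto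
      qed
    qed
    ultimately show "Y \<in> T" unfolding T_def using cY d XE by auto
  qed
  have inj2: "inj_on (\<lambda>d. X - {d}) D"
  proof
    fix d1 d2 assume "d1 \<in> D" "d2 \<in> D" "X - {d1} = X - {d2}"
    then show "d1 = d2" using DX by blast
  qed
  have disj: "(\<lambda>S. D \<union> S) ` SP \<inter> (\<lambda>d. X - {d}) ` D = {}" by blast
  have fSP: "finite SP" unfolding SP_def by (rule finite_subset[of _ "Pow Z"]) (use fZ in auto)
  have "card ((\<lambda>S. D \<union> S) ` SP \<union> (\<lambda>d. X - {d}) ` D) = card SP + card D"
    using card_Un_disjoint[OF finite_imageI[OF fSP] finite_imageI[OF fD] disj]
      card_image[OF inj1] card_image[OF inj2] by simp
  moreover have "card ((\<lambda>S. D \<union> S) ` SP \<union> (\<lambda>d. X - {d}) ` D) \<le> card T"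
    using fam1 fam2 fT by (intro card_mono) auto
  ultimately have "r \<le> card T" using cSP cD r1 unfolding s_def by linarith
  then show ?thesis using partA unfolding T_def Z_def F_def by simp
qed

end




definition decode :: "nat set \<Rightarrow> nat \<Rightarrow> (nat set \<times> nat) set \<Rightarrow> nat set set" where
  "decode E r P = {X. X \<subseteq> E \<and> card X = r \<and> \<not> (\<exists>p\<in>P. snd p < card (X \<inter> fst p))}"

context bm begin

lemma encode_exists:
  assumes r1: "1 \<le> r"
  shows "\<exists>P. P \<subseteq> Pow E \<times> {0..r} \<and> card P \<le> (card E choose (r - 1)) div r \<and> BB = decode E r P"
proof -
  define NB where "NB = {X. X \<subseteq> E \<and> card X = r \<and> X \<notin> BB}"
  define Zs where "Zs = (\<lambda>X. cyc (cl X)) ` NB"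
  define P where "P = (\<lambda>Z. (Z, rk Z)) ` Zs"
  have fNB: "finite NB" unfolding NB_def by (rule finite_subset[of _ "Pow E"]) (use finE in auto)
  have fZs: "finite Zs" unfolding Zs_def using fNB by simp
  define Ys where "Ys = {Y. Y \<subseteq> E \<and> card Y = r - 1}"
  define fib where "fib Z = {Y \<in> Ys. cyc (cl Y) = Z}" for Z
  have fYs: "finite Ys" unfolding Ys_def by (rule finite_subset[of _ "Pow E"]) (use finE in auto)
  have cYs: "card Ys = card E choose (r - 1)" unfolding Ys_def using n_subsets[OF finE] by simp
  have fibge: "\<forall>Z\<in>Zs. r \<le> card (fib Z)"
  proof
    fix Z assume "Z \<in> Zs"
    then obtain X where X: "X \<in> NB" "Z = cyc (cl X)" unfolding Zs_def by blast
    have "r \<le> card {Y. Y \<subseteq> E \<and> card Y = r - 1 \<and> cyc (cl Y) = cyc (cl X)}"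
      using nonbasis_main[OF r1, of X] X unfolding NB_def by blast
    moreover have "{Y. Y \<subseteq> E \<and> card Y = r - 1 \<and> cyc (cl Y) = cyc (cl X)} = fib Z"
      unfolding fib_def Ys_def using X by auto
    ultimately show "r \<le> card (fib Z)" by simp
  qed
  have "r * card Zs = (\<Sum>Z\<in>Zs. r)" by simp
  also have "\<dots> \<le> (\<Sum>Z\<in>Zs. card (fib Z))" using fibge by (intro sum_mono) auto
  also have "\<dots> = card (\<Union>Z\<in>Zs. fib Z)"
    by (rule card_UN_disjoint[symmetric]) (use fZs fYs in \<open>auto simp: fib_def\<close>)
  also have "\<dots> \<le> card Ys" using fYs by (intro card_mono) (auto simp: fib_def)
  finally have rZ: "r * card Zs \<le> card E choose (r - 1)" using cYs by simp
  have cP: "card P \<le> card Zs" unfolding P_def by (rule card_image_le[OF fZs])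
  have "card Zs \<le> (card E choose (r - 1)) div r" using rZ r1
    by (metis div_le_mono div_mult_self1_is_m mult.commute not_one_le_zero zero_less_iff_neq_zero)
  then have c: "card P \<le> (card E choose (r - 1)) div r" using cP by linarith
  have sub: "P \<subseteq> Pow E \<times> {0..r}"
  proof
    fix p assume "p \<in> P"
    then obtain X where "X \<in> NB" "p = (cyc (cl X), rk (cyc (cl X)))" unfolding P_def Zs_def by blast
    then show "p \<in> Pow E \<times> {0..r}" using cl_E rk_le_r unfolding cyc_def by auto
  qed
  have dec: "BB = decode E r P"
  proof
    show "BB \<subseteq> decode E r P"
    proof
      fix B assume B: "B \<in> BB"
      have "\<not> (\<exists>p\<in>P. snd p < card (B \<inter> fst p))"
      proof
        assume "\<exists>p\<in>P. snd p < card (B \<inter> fst p)"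
        then obtain Z where "rk Z < card (B \<inter> Z)" unfolding P_def by auto
        moreover have "card (B \<inter> Z) \<le> rk Z" using B_indep[OF B] indep_sub rk_ge by (meson inf_le1 inf_le2)
        ultimately show False by simp
      qed
      then show "B \<in> decode E r P" unfolding decode_def using B B_sub B_card by blast
    qed
    show "decode E r P \<subseteq> BB"
    proof
      fix X assume X: "X \<in> decode E r P"
      show "X \<in> BB"
      proof (rule ccontr)
        assume "X \<notin> BB"
        then have XN: "X \<in> NB" using X unfolding NB_def decode_def by blast
        then have "rk (cyc (cl X)) < card (X \<inter> cyc (cl X))"
          using nonbasis_main[OF r1, of X] unfolding NB_def by blast
        moreover have "(cyc (cl X), rk (cyc (cl X))) \<in> P" using XN unfolding P_def Zs_def by blast
        ultimately show False using X unfolding decode_def by force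
      qed
    qed
  qed
  show ?thesis using sub c dec by blast
qed

end

lemma card_bounded_subsets:
  assumes "finite U"
  shows "card {P. P \<subseteq> U \<and> card P \<le> m} = (\<Sum>j\<le>m. card U choose j)"
proof -
  have eq: "{P. P \<subseteq> U \<and> card P \<le> m} = (\<Union>j\<in>{..m}. {P. P \<subseteq> U \<and> card P = j})" by auto
  have "card (\<Union>j\<in>{..m}. {P. P \<subseteq> U \<and> card P = j}) = (\<Sum>j\<le>m. card {P. P \<subseteq> U \<and> card P = j})"
    by (rule card_UN_disjoint) (auto intro: finite_subset[of _ "Pow U"] simp: assms)
  then show ?thesis unfolding eq using n_subsets[OF assms] by simp
qed


lemma sum_binom_bound:
  fixes T m :: nat and M :: real
  assumes M0: "0 < M" and MT: "M \<le> real T" and mM: "real m \<le> M"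
  shows "(\<Sum>j\<le>m. real (T choose j)) \<le> (exp 1 * real T / M) powr M"
proof -
  define x where "x = M / real T"
  have T0: "real T > 0" using M0 MT by linarith
  have x0: "0 < x" unfolding x_def using M0 T0 by simp
  have x1: "x \<le> 1" unfolding x_def using MT T0 by simp
  have xM0: "x powr M > 0" using x0 by simp
  have mT: "m \<le> T" using mM MT by linarith
  have "(\<Sum>j\<le>m. real (T choose j)) \<le> (\<Sum>j\<le>m. real (T choose j) * x ^ j / x powr M)"
  proof (rule sum_mono)
    fix j assume j: "j \<in> {..m}"
    have "x powr M \<le> x powr real j" using powr_mono'[of "real j" M x] j mM x0 x1 by auto
    also have "\<dots> = x ^ j" using x0 by (simp add: powr_realpow)
    finally have "1 \<le> x ^ j / x powr M" using xM0 by simp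
    then show "real (T choose j) \<le> real (T choose j) * x ^ j / x powr M"
      using mult_left_mono[of 1 "x ^ j / x powr M" "real (T choose j)"] by simp
  qed
  also have "\<dots> = (\<Sum>j\<le>m. real (T choose j) * x ^ j) / x powr M" by (simp add: sum_divide_distrib)
  also have "\<dots> \<le> (\<Sum>j\<le>T. real (T choose j) * x ^ j) / x powr M"
    using mT x0 xM0 by (intro divide_right_mono sum_mono2) auto
  also have "(\<Sum>j\<le>T. real (T choose j) * x ^ j) = (x + 1) ^ T"
    by (simp add: binomial_ring)
  also have "(x + 1) ^ T \<le> exp x ^ T"
    using exp_ge_add_one_self[of x] x0 by (intro power_mono) (auto simp: add.commute)
  also have "exp x ^ T = exp M" unfolding x_def using T0 by (simp add: exp_of_nat_mult[symmetric])
  also have "exp M / x powr M = (exp 1 * real T / M) powr M"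
  proof -
    have "exp 1 * real T / M = exp 1 / x" unfolding x_def using M0 T0 by simp
    then have "(exp 1 * real T / M) powr M = exp 1 powr M / x powr M" by (simp add: powr_divide x0)
    moreover have "exp 1 powr M = exp M" by (simp add: powr_def)
    ultimately show ?thesis by simp
  qed
  finally show ?thesis using xM0 by (simp add: divide_right_mono)
qed


theorem corollary5p5:
  fixes n r :: nat
  assumes "r \<ge> 3" and "n \<ge> 2 * r"
  shows "log 2 (real (num_matroids n r))
    \<le> (1 / (real n - real r + 1)) * real (n choose r)
       * log 2 (exp 1 * 2 ^ n * (real r + 1) * (real n - real r + 1) / real (n choose r))"
proof -
  define E :: "nat set" where "E = {1..n}"
  have finE: "finite E" unfolding E_def by simp
  have cE: "card E = n" unfolding E_def by simp
  have r1: "1 \<le> r" using assms by simp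
  have rn: "r \<le> n" using assms by simp
  define MM where "MM = {B. matroid_bases E B \<and> matroid_rank_bases B r}"
  have num: "num_matroids n r = card MM" unfolding num_matroids_def MM_def E_def ..
  define U where "U = Pow E \<times> {0..r}"
  define m where "m = (n choose (r - 1)) div r"
  define Q where "Q = {P. P \<subseteq> U \<and> card P \<le> m}"
  have fU: "finite U" unfolding U_def using finE by simp
  have cU: "card U = 2 ^ n * (r + 1)" unfolding U_def using finE cE by (simp add: card_cartesian_product card_Pow)
  have sub: "MM \<subseteq> decode E r ` Q"
  proof
    fix BB assume BB: "BB \<in> MM"
    interpret bm E BB r using BB finE unfolding MM_def by unfold_locales auto
    obtain P where "P \<subseteq> Pow E \<times> {0..r}" "card P \<le> (card E choose (r - 1)) div r" "BB = decode E r P"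
      using encode_exists[OF r1] by blast
    then show "BB \<in> decode E r ` Q" unfolding Q_def U_def m_def using cE by blast
  qed
  have fQ: "finite Q" unfolding Q_def by (rule finite_subset[of _ "Pow U"]) (use fU in auto)
  have cMM: "card MM \<le> card Q"
    using card_mono[OF finite_imageI[OF fQ] sub] card_image_le[OF fQ, of "decode E r"] by linarith
  have cQ: "card Q = (\<Sum>j\<le>m. card U choose j)" unfolding Q_def by (rule card_bounded_subsets[OF fU])
  have pos: "card MM > 0"
  proof -
    define BU where "BU = {X. X \<subseteq> E \<and> card X = r}"
    obtain X0 where "X0 \<subseteq> E" "card X0 = r" using obtain_subset_with_card_n[of r E] rn cE by metis
    then have ne: "BU \<noteq> {}" unfolding BU_def by blast
    have "matroid_bases E BU"
      unfolding matroid_bases_def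
    proof (intro conjI ballI)
      show "BU \<subseteq> Pow E" unfolding BU_def by blast
      show "BU \<noteq> {}" by (rule ne)
      fix B1 B2 x assume B1: "B1 \<in> BU" and B2: "B2 \<in> BU" and x: "x \<in> B1 - B2"
      have f1: "finite B1" "finite B2" using B1 B2 finE finite_subset unfolding BU_def by blast+
      have "B2 - B1 \<noteq> {}"
      proof
        assume "B2 - B1 = {}"
        then have "B2 \<subseteq> B1" by blast
        then have "B2 = B1" using card_subset_eq[OF f1(1)] B1 B2 unfolding BU_def by simp
        then show False using x by blast
      qed
      then obtain y where y: "y \<in> B2 - B1" by blast
      have "card (insert y (B1 - {x})) = Suc (card (B1 - {x}))" using y f1 by simp
      also have "card (B1 - {x}) = r - 1" using x f1 B1 unfolding BU_def by simp
      finally have "card (insert y (B1 - {x})) = r" using r1 by simp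
      moreover have "insert y (B1 - {x}) \<subseteq> E" using y B1 B2 unfolding BU_def by blast
      ultimately show "\<exists>y\<in>B2 - B1. insert y (B1 - {x}) \<in> BU" using y unfolding BU_def by blast
    qed
    moreover have "matroid_rank_bases BU r" unfolding matroid_rank_bases_def BU_def by blast
    ultimately have "BU \<in> MM" unfolding MM_def by blast
    moreover have "finite MM" unfolding MM_def matroid_bases_def
      by (rule finite_subset[of _ "Pow (Pow E)"]) (use finE in auto)
    ultimately show ?thesis using card_gt_0_iff by blast
  qed
  define Mr where "Mr = real (n choose r) / (real n - real r + 1)"
  have nr1: "real n - real r + 1 > 0" using rn by simp
  have ident: "r * (n choose r) = (n - r + 1) * (n choose (r - 1))"
  proof -
    have "Suc (r - 1 + (n - r)) = n" using r1 rn by simp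
    moreover have "Suc (r - 1) = r" using r1 by simp
    moreover have "Suc (n - r) = n - r + 1" by simp
    ultimately show ?thesis using Suc_times_binomial_add[of "r - 1" "n - r"] by metis
  qed
  have Mr_alt: "Mr = real (n choose (r - 1)) / real r"
  proof -
    have "real r * real (n choose r) = (real n - real r + 1) * real (n choose (r - 1))"
      using ident rn by (metis of_nat_mult of_nat_add of_nat_1 of_nat_diff)
    then show ?thesis unfolding Mr_def using nr1 r1 by (simp add: field_simps)
  qed
  have Cpos: "n choose r > 0" using rn by simp
  have Mr0: "0 < Mr" unfolding Mr_def using Cpos nr1 by simp
  have MrT: "Mr \<le> real (card U)"
  proof -
    have "Mr \<le> real (n choose r)" unfolding Mr_def using nr1 Cpos rn
      by (simp add: divide_le_eq)
    also have "\<dots> \<le> real (2 ^ n)" using binomial_le_pow2[of n r] by linarith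
    also have "\<dots> \<le> real (card U)" unfolding cU by simp
    finally show ?thesis .
  qed
  have mM: "real m \<le> Mr"
  proof -
    have "m * r \<le> n choose (r - 1)" unfolding m_def by (rule div_times_less_eq_dividend)
    then have "real m * real r \<le> real (n choose (r - 1))" by (metis of_nat_le_iff of_nat_mult)
    then show ?thesis unfolding Mr_alt using r1 by (simp add: le_divide_eq)
  qed
  have bound: "real (card MM) \<le> (exp 1 * real (card U) / Mr) powr Mr"
  proof -
    have "real (card MM) \<le> real (card Q)" using cMM by simp
    also have "\<dots> = (\<Sum>j\<le>m. real (card U choose j))" unfolding cQ by simp
    also have "\<dots> \<le> (exp 1 * real (card U) / Mr) powr Mr" by (rule sum_binom_bound[OF Mr0 MrT mM])
    finally show ?thesis .
  qed
  have cUpos: "card U > 0" unfolding cU by simp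
  then have "real (card U) > 0" by simp
  then have base0: "exp 1 * real (card U) / Mr > 0" using Mr0 by simp
  have "log 2 (real (card MM)) \<le> log 2 ((exp 1 * real (card U) / Mr) powr Mr)"
    using bound pos base0 cUpos by (subst log_le_cancel_iff) auto
  also have "\<dots> = Mr * log 2 (exp 1 * real (card U) / Mr)" by (simp add: log_powr)
  also have "exp 1 * real (card U) / Mr = exp 1 * 2 ^ n * (real r + 1) * (real n - real r + 1) / real (n choose r)"
    unfolding cU Mr_def using nr1 Cpos by (simp add: field_simps)
  also have "Mr = (1 / (real n - real r + 1)) * real (n choose r)" unfolding Mr_def by simp
  finally show ?thesis unfolding num .
qed


end
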